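(* Consider the resilient constrained consensus algorithm described in the context, with $\bigcap_{i\in\mathcal H}\mathcal X_i=\{x^*\}$. For all times $t$, $$\sum_{i\in\mathcal H}\psi_i(t)\le 4|\mathcal H|^3V(t),$$ where $$\psi_i(t)=\Big\|\sum_{j\in\mathcal M_i(t)}(x_{ji}(t)-x_i(t))\Big\|^2\quad\text{and}\quad V(t)=\sum_{i\in\mathcal H}\|x_i(t)-x^*\|^2.$$
   Context: Setting: There are $n$ agents $\mathcal N=\{1,\dots,n\}$ on a complete communication graph. A known integer $f\ge0$ is given. The agents are partitioned into normal agents $\mathcal H$ and Byzantine agents $\mathcal F$ with $|\mathcal F|\le f$. Each $i\in\mathcal H$ has a closed convex $\mathcal X_i\subseteq\mathbb R^m$. Algorithm: normal agent $i$ has state $x_i(t)\in\mathbb R^m$ and at time $t$ receives $x_{ji}(t)$ from each $j\ne i$. If $j\in\mathcal H$, then $x_{ji}(t)=x_j(t)$. If $j\in\mathcal F$, the value is arbitrary and may differ per recipient. Agent $i$ discards the $f$ received vectors with largest $\|x_i(t)-x_{ji}(t)\|$, with ties broken arbitrarily. The remaining $n-f-1$ senders form $\mathcal M_i(t)\subseteq\mathcal N\setminus\{i\}$. The update is $$x_i(t+1)=\mathrm P_{\mathcal X_i}\Big[x_i(t)+\alpha\sum_{j\in\mathcal M_i(t)}(x_{ji}(t)-x_i(t))\Big],$$ with $\alpha>0$ and $\mathrm P_{\mathcal C}$ the Euclidean projection. *)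

theory Defs
  imports "HOL-Analysis.Analysis"
begin

end

theory Submission
  imports Defs
begin

theorem lemma4:
  fixes n f :: nat
    and H :: "nat set"
    and X :: "nat \<Rightarrow> (real^'m) set"
    and alpha :: real
    and xstar :: "real^'m"
    and x :: "nat \<Rightarrow> nat \<Rightarrow> real^'m"
    and msg :: "nat \<Rightarrow> nat \<Rightarrow> nat \<Rightarrow> real^'m"
    and M :: "nat \<Rightarrow> nat \<Rightarrow> nat set"
    and t :: nat
  assumes agents: "H \<subseteq> {..<n}"
    and byz: "card ({..<n} - H) \<le> f"
    and Xcc: "\<forall>i\<in>H. closed (X i) \<and> convex (X i)"
    and inter: "(\<Inter>i\<in>H. X i) = {xstar}"
    and alpha: "alpha > 0"
    and honest_msg: "\<forall>s. \<forall>i\<in>H. \<forall>j\<in>H - {i}. msg s j i = x s j"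
    and filter: "\<forall>s. \<forall>i\<in>H. M s i \<subseteq> {..<n} - {i}
                   \<and> card ({..<n} - {i} - M s i) = f
                   \<and> (\<forall>j\<in>M s i. \<forall>k\<in>{..<n} - {i} - M s i.
                        norm (x s i - msg s j i) \<le> norm (x s i - msg s k i))"
    and update: "\<forall>s. \<forall>i\<in>H. x (Suc s) i =
                   closest_point (X i) (x s i + alpha *\<^sub>R (\<Sum>j\<in>M s i. msg s j i - x s i))"
  shows "(\<Sum>i\<in>H. (norm (\<Sum>j\<in>M t i. msg t j i - x t i))\<^sup>2)
           \<le> 4 * real (card H) ^ 3 * (\<Sum>i\<in>H. (norm (x t i - xstar))\<^sup>2)"
proof -
  let ?d = "\<lambda>k. norm (x t k - xstar)"
  define V where "V = (\<Sum>i\<in>H. (?d i)\<^sup>2)"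
  define S where "S = sqrt V"
  let ?h = "card H"
  have finH: "finite H" using agents finite_subset by blast
  have V0: "V \<ge> 0" unfolding V_def by (simp add: sum_nonneg)
  have dS: "?d k \<le> S" if "k \<in> H" for k
  proof -
    have "(?d k)\<^sup>2 \<le> V" unfolding V_def
      by (rule member_le_sum[OF that _ finH]) simp
    then show ?thesis unfolding S_def by (simp add: real_le_rsqrt)
  qed
  have cardn: "n \<le> ?h + f"
  proof -
    have "card ({..<n} - H) = n - card H"
      using agents finH by (simp add: card_Diff_subset)
    moreover have "card H \<le> n" using agents card_mono[of "{..<n}" H] by simp
    ultimately show ?thesis using byz by linarith
  qed
  have bnd: "norm (msg t j i - x t i) \<le> 2 * S" if i: "i \<in> H" and j: "j \<in> M t i" for i j
  proof -
    have fi: "M t i \<subseteq> {..<n} - {i}" and cC: "card ({..<n} - {i} - M t i) = f"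
      and cmp: "\<forall>k\<in>{..<n} - {i} - M t i. norm (x t i - msg t j i) \<le> norm (x t i - msg t k i)"
      using filter i j by blast+
    show ?thesis
    proof (cases "j \<in> H")
      case True
      then have "msg t j i = x t j" using honest_msg i j fi by blast
      then have "norm (msg t j i - x t i) \<le> ?d j + ?d i"
        by (metis norm_diff_triangle_le norm_minus_commute order_refl)
      then show ?thesis using dS[OF True] dS[OF i] by linarith
    next
      case False
      let ?C = "{..<n} - {i} - M t i"
      have "\<exists>k\<in>?C. k \<in> H"
      proof (rule ccontr)
        assume "\<not> ?thesis"
        then have "?C \<subseteq> ({..<n} - H) - {j}" using j by blast
        then have "card ?C \<le> card (({..<n} - H) - {j})" by (intro card_mono) auto
        also have "\<dots> = card ({..<n} - H) - 1" using j fi False by (subst card_Diff_singleton) auto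
        finally have "f \<le> card ({..<n} - H) - 1" using cC by simp
        moreover have "j \<in> {..<n} - H" using j fi False by blast
        then have "card ({..<n} - H) \<ge> 1"
          by (metis One_nat_def Suc_leI card_gt_0_iff empty_iff finite_Diff finite_lessThan)
        ultimately show False using byz by linarith
      qed
      then obtain k where k: "k \<in> ?C" "k \<in> H" by blast
      have "k \<noteq> i" using k by blast
      then have "msg t k i = x t k" using honest_msg i k by blast
      then have "norm (msg t j i - x t i) \<le> norm (x t i - x t k)"
        using cmp k by (metis norm_minus_commute)
      also have "\<dots> \<le> ?d i + ?d k"
        by (metis norm_diff_triangle_le norm_minus_commute order_refl)
      finally show ?thesis using dS[OF i] dS[OF k(2)] by linarith
    qed
  qed
  have each: "(norm (\<Sum>j\<in>M t i. msg t j i - x t i))\<^sup>2 \<le> real ?h ^ 2 * (4 * V)" if i: "i \<in> H" for i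
  proof -
    have fi: "M t i \<subseteq> {..<n} - {i}" and cC: "card ({..<n} - {i} - M t i) = f"
      using filter i by blast+
    have finM: "finite (M t i)" using fi finite_subset by blast
    have "card ({..<n} - {i} - M t i) = card ({..<n} - {i}) - card (M t i)"
      using fi finM by (simp add: card_Diff_subset)
    moreover have "card (M t i) \<le> card ({..<n} - {i})" using fi by (intro card_mono) auto
    ultimately have "card ({..<n} - {i}) = card (M t i) + f" using cC by linarith
    moreover have "card ({..<n} - {i}) = n - 1" using i agents by auto
    ultimately have cM: "card (M t i) \<le> ?h" using cardn by linarith
    have "norm (\<Sum>j\<in>M t i. msg t j i - x t i) \<le> (\<Sum>j\<in>M t i. norm (msg t j i - x t i))"
      by (rule norm_sum)
    also have "\<dots> \<le> (\<Sum>j\<in>M t i. 2 * S)" by (rule sum_mono) (use bnd i in auto)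
    also have "\<dots> = real (card (M t i)) * (2 * S)" by simp
    also have "\<dots> \<le> real ?h * (2 * S)" using cM S_def V0 by (intro mult_right_mono) auto
    finally have "norm (\<Sum>j\<in>M t i. msg t j i - x t i) \<le> real ?h * (2 * S)" .
    then have "(norm (\<Sum>j\<in>M t i. msg t j i - x t i))\<^sup>2 \<le> (real ?h * (2 * S))\<^sup>2"
      by (intro power_mono) auto
    also have "\<dots> = real ?h ^ 2 * (4 * V)" using V0 unfolding S_def by (simp add: power_mult_distrib)
    finally show ?thesis .
  qed
  have "(\<Sum>i\<in>H. (norm (\<Sum>j\<in>M t i. msg t j i - x t i))\<^sup>2) \<le> (\<Sum>i\<in>H. real ?h ^ 2 * (4 * V))"
    by (rule sum_mono) (use each in auto)
  also have "\<dots> = 4 * real ?h ^ 3 * V" by (simp add: power_numeral_reduce)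
  finally show ?thesis unfolding V_def .
qed

end
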